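(* Let $a,b,c$ be real numbers with $0<a,b<+\infty$ and $a+b<c<a+b+1$, and let $w\in(0,1)$. Define $$P(a,b,c):=F(a,b,c;1)=\frac{\Gamma(c)\Gamma(c-a-b)}{\Gamma(c-a)\Gamma(c-b)},\qquad Q(a,b,c):=\frac{\Gamma(c)\Gamma(a+b+1-c)}{(c-a-b)\Gamma(a)\Gamma(b)}.$$ Then $$0<P(a,b,c)-1<\frac{P(a,b,c)-F(a,b,c;w)}{(1-w)^{c-a-b}}<Q(a,b,c).$$
   Context: $F(\alpha,\beta,\gamma;w)$ denotes the Gauss hypergeometric function ${}_2F_1$ and $\Gamma$ the Gamma function. *)

theory Defs
  imports "HOL-Analysis.Analysis"
begin

definition hyp2F1 :: "real \<Rightarrow> real \<Rightarrow> real \<Rightarrow> real \<Rightarrow> real" where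
  "hyp2F1 a b c w = (\<Sum>n. pochhammer a n * pochhammer b n / (pochhammer c n * fact n) * w ^ n)"

definition P_abc :: "real \<Rightarrow> real \<Rightarrow> real \<Rightarrow> real" where
  "P_abc a b c = Gamma c * Gamma (c - a - b) / (Gamma (c - a) * Gamma (c - b))"

definition Q_abc :: "real \<Rightarrow> real \<Rightarrow> real \<Rightarrow> real" where
  "Q_abc a b c = Gamma c * Gamma (a + b + 1 - c) / ((c - a - b) * Gamma a * Gamma b)"

end

theory Submission
  imports Defs
begin

lemma poch_pos_real: "(0::real) < x \<Longrightarrow> 0 < pochhammer x n"
  by (rule pochhammer_pos)

lemma gamma_ineq:
  fixes x y u v :: real
  assumes "0 < v" "v < x" "v < y" "x + y = u + v"
  shows "Gamma x * Gamma y < Gamma u * Gamma v"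
proof -
  have x0: "x > 0" and y0: "y > 0" and u0: "u > 0" using assms by auto
  have key: "pochhammer u (Suc n) * pochhammer v (Suc n) * (x * y) \<le> pochhammer x (Suc n) * pochhammer y (Suc n) * (u * v)" for n
  proof (induction n)
    case 0 then show ?case by (simp add: algebra_simps)
  next
    case (Suc n)
    have fac: "(u + Suc n) * (v + Suc n) \<le> (x + Suc n) * (y + Suc n)"
    proof -
      have "(x + Suc n) * (y + Suc n) - (u + Suc n) * (v + Suc n) = (x - v) * (y - v)"
        using assms(4) by (simp add: algebra_simps) (smt (verit) assms(4) mult.commute distrib_left right_diff_distrib)
      also have "\<dots> > 0" using assms by simp
      finally show ?thesis by simp
    qed
    have p1: "0 \<le> pochhammer u (Suc n) * pochhammer v (Suc n) * (x * y)"
      using u0 assms x0 y0 by (simp add: pochhammer_pos less_imp_le)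
    have p2: "0 \<le> (u + Suc n) * (v + Suc n)" using u0 assms by simp
    have "pochhammer u (Suc (Suc n)) * pochhammer v (Suc (Suc n)) * (x * y)
       = (pochhammer u (Suc n) * pochhammer v (Suc n) * (x * y)) * ((u + Suc n) * (v + Suc n))"
      by (simp only: pochhammer_Suc[of _ "Suc n"]) (simp add: algebra_simps)
    also have "\<dots> \<le> (pochhammer x (Suc n) * pochhammer y (Suc n) * (u * v)) * ((x + Suc n) * (y + Suc n))"
      apply (rule mult_mono[OF Suc.IH fac _ p2])
      using Suc.IH p1 by linarith
    also have "\<dots> = pochhammer x (Suc (Suc n)) * pochhammer y (Suc (Suc n)) * (u * v)"
      by (simp only: pochhammer_Suc[of _ "Suc n"]) (simp add: algebra_simps)
    finally show ?case .
  qed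
  define r where "r n = Gamma_series' x n * Gamma_series' y n / (Gamma_series' u n * Gamma_series' v n)" for n
  have lim: "r \<longlonglongrightarrow> Gamma x * Gamma y / (Gamma u * Gamma v)"
  proof -
    have "Gamma u > 0" "Gamma v > 0" using u0 assms by auto
    then show ?thesis unfolding r_def
      by (intro tendsto_intros Gamma_series'_LIMSEQ) auto
  qed
  have req: "r n = pochhammer u n * pochhammer v n / (pochhammer x n * pochhammer y n)" if "n \<ge> 1" for n
  proof -
    have e: "exp (x * ln (real n)) * exp (y * ln (real n)) = exp (u * ln (real n)) * exp (v * ln (real n))"
    proof -
      have "x * ln (real n) + y * ln (real n) = u * ln (real n) + v * ln (real n)"
        by (metis assms(4) distrib_right)
      then show ?thesis by (metis exp_add)
    qed
    have "fact (n-1) \<noteq> (0::real)" by simp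
    have pos: "pochhammer x n > 0" "pochhammer y n > 0" "pochhammer u n > 0" "pochhammer v n > 0"
      using x0 y0 u0 assms(1) by (simp_all add: pochhammer_pos)
    have "r n = (exp (x * ln (real n)) * exp (y * ln (real n))) / (exp (u * ln (real n)) * exp (v * ln (real n)))
       * (pochhammer u n * pochhammer v n / (pochhammer x n * pochhammer y n))"
      unfolding r_def Gamma_series'_def using pos \<open>fact (n-1) \<noteq> (0::real)\<close>
      by (simp add: field_simps)
    also have "\<dots> = pochhammer u n * pochhammer v n / (pochhammer x n * pochhammer y n)"
      by (simp add: e)
    finally show ?thesis .

  qed
  have bnd: "r n \<le> u * v / (x * y)" if "n \<ge> 1" for n
  proof -
    define m where "m = n - 1"
    have m: "n = Suc m" using that m_def by simp
    have px: "pochhammer x n * pochhammer y n > 0" using x0 y0 by (simp add: pochhammer_pos)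
    have k: "pochhammer u n * pochhammer v n * (x * y) \<le> pochhammer x n * pochhammer y n * (u * v)"
      using key[of m] unfolding m by simp
    have xy: "x * y > 0" using x0 y0 by simp
    have pxn: "pochhammer x n \<noteq> 0" "pochhammer y n \<noteq> 0" using x0 y0 by (simp_all add: pochhammer_pos less_imp_neq[symmetric])
    have "pochhammer u n * pochhammer v n / (pochhammer x n * pochhammer y n)
        = (pochhammer u n * pochhammer v n * (x * y)) / ((pochhammer x n * pochhammer y n) * (x * y))"
      using x0 y0 pxn by simp
    also have "\<dots> \<le> (pochhammer x n * pochhammer y n * (u * v)) / ((pochhammer x n * pochhammer y n) * (x * y))"
      by (rule divide_right_mono[OF k]) (use px xy in simp)
    also have "\<dots> = u * v / (x * y)" using pxn by simp
    finally show ?thesis unfolding req[OF that] .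
  qed
  have "Gamma x * Gamma y / (Gamma u * Gamma v) \<le> u * v / (x * y)"
    by (rule LIMSEQ_le_const2[OF lim]) (use bnd in auto)
  also have "\<dots> < 1"
  proof -
    have uu: "u = x + y - v" using assms(4) by simp
    have "(x * y) - u * v = (x - v) * (y - v)" unfolding uu by (simp add: algebra_simps)
    also have "\<dots> > 0" using assms by simp
    finally show ?thesis using x0 y0 by simp
  qed
  finally show ?thesis using u0 assms by (simp add: divide_simps)
qed

definition tt :: "real \<Rightarrow> real \<Rightarrow> real \<Rightarrow> nat \<Rightarrow> real" where
  "tt a b c n = pochhammer a n * pochhammer b n / (pochhammer c n * fact n)"

lemma tt_pos: "0 < a \<Longrightarrow> 0 < b \<Longrightarrow> 0 < c \<Longrightarrow> 0 < tt a b c n"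
  unfolding tt_def by (simp add: pochhammer_pos)

lemma tt_0 [simp]: "tt a b c 0 = 1"
  unfolding tt_def by simp

lemma tt_Suc:
  assumes "0 < c"
  shows "tt a b c (Suc n) = tt a b c n * ((a + n) * (b + n) / ((c + n) * (n + 1)))"
proof -
  have "pochhammer c n > 0" using assms by (simp add: pochhammer_pos)
  moreover have "c + n > 0" using assms by simp
  ultimately show ?thesis unfolding tt_def
    by (simp add: pochhammer_Suc field_simps)
qed

lemma poch_mono:
  fixes x y :: real
  assumes "0 < x" "x \<le> y"
  shows "pochhammer x n \<le> pochhammer y n"
proof (induction n)
  case 0 then show ?case by simp
next
  case (Suc n)
  have "pochhammer x n * (x + n) \<le> pochhammer y n * (y + n)"
    apply (rule mult_mono[OF Suc.IH])
    using assms by (auto intro: pochhammer_nonneg)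
  then show ?case by (simp add: pochhammer_Suc)
qed

lemma tt_mono_c:
  assumes "0 < a" "0 < b" "0 < c" "c \<le> c'"
  shows "tt a b c' n \<le> tt a b c n"
proof -
  have "pochhammer c n \<le> pochhammer c' n" by (rule poch_mono) (use assms in auto)
  moreover have "pochhammer c n > 0" using assms by (simp add: pochhammer_pos)
  moreover have "pochhammer a n * pochhammer b n \<ge> 0" using assms by (simp add: pochhammer_pos less_imp_le)
  ultimately show ?thesis unfolding tt_def
    by (intro divide_left_mono mult_right_mono mult_pos_pos) auto
qed

lemma tt_shift_bound:
  assumes "0 < a" "0 < b" "0 < c" "0 \<le> m" "1 \<le> n"
  shows "tt a b (c + m) n \<le> c / (c + m) * tt a b c n"
proof -
  obtain k where k: "n = Suc k" using assms(5) by (cases n) auto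
  have "pochhammer (c+1) k \<le> pochhammer (c+m+1) k" by (rule poch_mono) (use assms in auto)
  hence "c * (c + m) * pochhammer (c+1) k \<le> c * (c + m) * pochhammer (c+m+1) k"
    by (rule mult_left_mono) (use assms in simp)
  moreover have "pochhammer c n * (c + m) = c * (c + m) * pochhammer (c+1) k"
    unfolding k pochhammer_rec by simp
  moreover have "c * pochhammer (c + m) n = c * (c + m) * pochhammer (c+m+1) k"
    unfolding k pochhammer_rec by simp
  ultimately have le: "pochhammer c n * (c + m) \<le> c * pochhammer (c + m) n" by metis
  have p1: "pochhammer c n > 0" "pochhammer (c+m) n > 0" using assms by (simp_all add: pochhammer_pos)
  have ab: "pochhammer a n * pochhammer b n / fact n \<ge> 0" using assms by (simp add: pochhammer_pos less_imp_le)
  have "tt a b (c + m) n = (pochhammer a n * pochhammer b n / fact n) / pochhammer (c+m) n"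
    unfolding tt_def by simp
  also have "\<dots> \<le> (pochhammer a n * pochhammer b n / fact n) * (c / ((c + m) * pochhammer c n))"
  proof -
    have "1 / pochhammer (c+m) n \<le> c / ((c + m) * pochhammer c n)"
      using le p1 assms by (simp add: divide_simps mult.commute)
    then show ?thesis using ab by (metis divide_inverse inverse_eq_divide mult_left_mono)
  qed
  also have "\<dots> = c / (c + m) * tt a b c n" unfolding tt_def by (simp add: mult_ac)
  finally show ?thesis .
qed

lemma e_lim:
  fixes s :: real
  assumes "0 < s" "s < 1"
  shows "(\<lambda>k. pochhammer (1 - s) k / fact k) \<longlonglongrightarrow> 0"
proof -
  have G: "Gamma_series' (1 - s) \<longlonglongrightarrow> Gamma (1 - s)" by (rule Gamma_series'_LIMSEQ)
  have Gp: "Gamma (1 - s) > 0" using assms by simp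
  have pw: "(\<lambda>k. real k powr (- s)) \<longlonglongrightarrow> 0"
    by (rule tendsto_neg_powr) (use assms filterlim_real_sequentially in auto)
  have lim: "(\<lambda>k. real k powr (- s) * inverse (Gamma_series' (1 - s) k)) \<longlonglongrightarrow> 0 * inverse (Gamma (1 - s))"
    by (intro tendsto_intros pw G) (use Gp in auto)
  have eq: "real k powr (- s) * inverse (Gamma_series' (1 - s) k) = pochhammer (1 - s) k / fact k" if "k \<ge> 1" for k
  proof -
    have kp: "real k > 0" using that by simp
    have e1: "exp ((1 - s) * ln (real k)) = real k * real k powr (- s)"
      using kp by (simp add: powr_def algebra_simps exp_diff exp_minus field_simps)
    have fk: "fact k = real k * fact (k - 1)"
      using that by (metis One_nat_def Suc_le_eq fact_Suc not0_implies_Suc of_nat_fact of_nat_mult zero_less_iff_neq_zero diff_Suc_1 Suc_pred)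
    have pp: "pochhammer (1 - s) k > 0" using assms by (simp add: pochhammer_pos)
    have pw0: "real k powr (- s) > 0" using kp by simp
    show ?thesis unfolding Gamma_series'_def using e1 fk pp pw0 kp
      by (simp add: field_simps)
  qed
  have "\<forall>\<^sub>F k in sequentially. real k powr (- s) * inverse (Gamma_series' (1 - s) k) = pochhammer (1 - s) k / fact k"
    using eventually_ge_at_top[of 1] by eventually_elim (rule eq)
  from tendsto_cong[OF this] lim show ?thesis by simp
qed

lemma tt_bound:
  assumes "0 < a" "0 < b" "a + b < c" "c < a + b + 1" "1 \<le> j"
  shows "tt a b c j < Gamma c / (Gamma a * Gamma b) * Gamma (real j - (c - a - b)) / fact j"
proof -
  have c0: "c > 0" using assms by simp
  have ineq: "Gamma (a + j) * Gamma (b + j) < Gamma (c + j) * Gamma (real j - (c - a - b))"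
    by (rule gamma_ineq) (use assms in auto)
  have pa: "pochhammer a j = Gamma (a + j) / Gamma a" using assms by (intro pochhammer_Gamma) auto
  have pb: "pochhammer b j = Gamma (b + j) / Gamma b" using assms by (intro pochhammer_Gamma) auto
  have pc: "pochhammer c j = Gamma (c + j) / Gamma c" using c0 by (intro pochhammer_Gamma) auto
  define C where "C = Gamma c / (Gamma a * Gamma b * fact j)"
  have C0: "C > 0" unfolding C_def using assms c0 by simp
  have gcj: "Gamma (c + j) > 0" using c0 by simp
  have "tt a b c j = C * (Gamma (a + j) * Gamma (b + j) / Gamma (c + j))"
    unfolding tt_def pa pb pc C_def using assms c0 gcj by (simp add: field_simps)
  also have "\<dots> < C * Gamma (real j - (c - a - b))"
    apply (rule mult_strict_left_mono[OF _ C0])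
    using ineq gcj by (simp add: pos_divide_less_eq mult.commute)
  also have "\<dots> = Gamma c / (Gamma a * Gamma b) * Gamma (real j - (c - a - b)) / fact j"
    unfolding C_def by simp
  finally show ?thesis .
qed

lemma gdiff:
  fixes s :: real
  assumes "0 < s" "s < 1"
  shows "Gamma (real (Suc n) - s) / fact (Suc n)
           = (1 / s) * (Gamma (real n + 1 - s) / fact n - Gamma (real (Suc n) + 1 - s) / fact (Suc n))"
proof -
  have nz: "real n + 1 - s \<notin> \<int>\<^sub>\<le>\<^sub>0" using assms by auto
  have "Gamma ((real n + 1 - s) + 1) = (real n + 1 - s) * Gamma (real n + 1 - s)"
    by (rule Gamma_plus1[OF nz])
  moreover have "real (Suc n) + 1 - s = (real n + 1 - s) + 1" by simp
  ultimately have g: "Gamma (real (Suc n) + 1 - s) = (real n + 1 - s) * Gamma (real n + 1 - s)"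
    by metis
  have f: "fact (Suc n) = (real n + 1) * (fact n :: real)" by (simp add: algebra_simps)
  have aux: "G / (m * F) = (1/s) * (G / F - (m - s) * G / (m * F))" if "F \<noteq> 0" "m > 0" for G F m :: real
    using that assms by (simp add: field_simps)
  have r: "real (Suc n) - s = real n + 1 - s" by simp
  show ?thesis unfolding g f r
    by (rule aux) auto
qed

lemma g_lim:
  fixes s :: real
  assumes "0 < s" "s < 1"
  shows "(\<lambda>n. Gamma (real n + 1 - s) / fact n) \<longlonglongrightarrow> 0"
proof -
  have "(\<lambda>n. Gamma (1 - s) * (pochhammer (1 - s) n / fact n)) \<longlonglongrightarrow> Gamma (1 - s) * 0"
    by (intro tendsto_intros e_lim assms)
  moreover have "Gamma (1 - s) * (pochhammer (1 - s) n / fact n) = Gamma (real n + 1 - s) / fact n" for n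
  proof -
    have "pochhammer (1 - s) n = Gamma (1 - s + n) / Gamma (1 - s)"
      using assms by (intro pochhammer_Gamma) auto
    moreover have "Gamma (1 - s) > 0" using assms by simp
    ultimately show ?thesis by (simp add: algebra_simps)
  qed
  ultimately show ?thesis by simp
qed

lemma tt_summable_aux:
  assumes "0 < a" "0 < b" "a + b < c"
  shows "summable (tt a b c) \<and> (\<lambda>n. real n * tt a b c n) \<longlonglongrightarrow> 0"
proof -
  define c' where "c' = min c (a + b + 1/2)"
  define s where "s = c' - a - b"
  have s0: "0 < s" "s < 1" unfolding s_def c'_def using assms by auto
  have c'le: "c' \<le> c" "a + b < c'" "c' < a + b + 1" unfolding c'_def using assms by auto
  define K where "K = Gamma c' / (Gamma a * Gamma b)"
  have K0: "K > 0" unfolding K_def using assms c'le by simp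
  define g where "g n = Gamma (real n + 1 - s) / fact n" for n
  have gl: "g \<longlonglongrightarrow> 0" unfolding g_def by (rule g_lim[OF s0])
  have bnd: "tt a b c (Suc n) \<le> K * Gamma (real (Suc n) - s) / fact (Suc n)" for n
  proof -
    have "tt a b c (Suc n) \<le> tt a b c' (Suc n)"
      by (rule tt_mono_c) (use assms c'le in auto)
    also have "\<dots> < K * Gamma (real (Suc n) - s) / fact (Suc n)"
      unfolding K_def s_def by (rule tt_bound) (use assms c'le in auto)
    finally show ?thesis by simp
  qed
  have eq: "K * Gamma (real (Suc n) - s) / fact (Suc n) = (K / s) * (g n - g (Suc n))" for n
  proof -
    have "K * Gamma (real (Suc n) - s) / fact (Suc n) = K * (Gamma (real (Suc n) - s) / fact (Suc n))" by simp
    also have "\<dots> = K * ((1/s) * (g n - g (Suc n)))" unfolding g_def by (subst gdiff[OF s0]) (rule refl)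
    also have "\<dots> = (K/s) * (g n - g (Suc n))" by simp
    finally show ?thesis .
  qed
  have "summable (\<lambda>n. (K / s) * (g n - g (Suc n)))"
    by (intro summable_mult sums_summable[OF telescope_sums'[OF gl]])
  hence "summable (\<lambda>n. tt a b c (Suc n))"
    apply (rule summable_comparison_test[rotated])
    using bnd eq tt_pos[of a b c] assms by (auto intro!: exI[of _ 0] simp: less_imp_le)
  hence sm: "summable (tt a b c)" by (simp add: summable_Suc_iff)
  have "(\<lambda>n. K * g n) \<longlonglongrightarrow> K * 0" by (intro tendsto_intros gl)
  hence up: "(\<lambda>n. K * g n) \<longlonglongrightarrow> 0" by simp
  have "(\<lambda>n. real (Suc n) * tt a b c (Suc n)) \<longlonglongrightarrow> 0"
  proof (rule tendsto_sandwich[OF _ _ tendsto_const up])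
    show "\<forall>\<^sub>F n in sequentially. 0 \<le> real (Suc n) * tt a b c (Suc n)"
      using tt_pos[of a b c] assms by (auto intro!: always_eventually less_imp_le)
    show "\<forall>\<^sub>F n in sequentially. real (Suc n) * tt a b c (Suc n) \<le> K * g n"
    proof (intro always_eventually allI)
      fix n
      have "real (Suc n) * tt a b c (Suc n) \<le> real (Suc n) * (K * Gamma (real (Suc n) - s) / fact (Suc n))"
        by (rule mult_left_mono[OF bnd]) simp
      also have "\<dots> = real (Suc n) * (K * Gamma (real (Suc n) - s)) / (real (Suc n) * fact n)"
        by (simp del: of_nat_Suc)
      also have "\<dots> = K * Gamma (real (Suc n) - s) / fact n"
        by (rule nonzero_mult_divide_mult_cancel_left) simp
      also have "\<dots> = K * g n" unfolding g_def by (simp add: algebra_simps)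
      finally show "real (Suc n) * tt a b c (Suc n) \<le> K * g n" .
    qed
  qed
  hence "(\<lambda>n. real n * tt a b c n) \<longlonglongrightarrow> 0" by (rule LIMSEQ_imp_Suc)
  with sm show ?thesis by simp
qed

lemma tt_c1:
  assumes "0 < c"
  shows "tt a b (c + 1) n = c / (c + n) * tt a b c n"
proof -
  have "c * pochhammer (c + 1) n = pochhammer c n * (c + n)"
    using pochhammer_rec[of c n] pochhammer_Suc[of c n] by simp
  hence p: "pochhammer (c + 1) n = pochhammer c n * (c + n) / c" using assms by (simp add: field_simps)
  have "pochhammer c n > 0" using assms by (simp add: pochhammer_pos)
  moreover have "c + n > 0" using assms by simp
  ultimately show ?thesis unfolding tt_def p using assms by (simp add: field_simps)
qed

lemma contiguous:
  assumes "0 < a" "0 < b" "a + b < c"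
  shows "c * (c - a - b) * suminf (tt a b c) = (c - a) * (c - b) * suminf (tt a b (c + 1))"
proof -
  have c0: "c > 0" using assms by simp
  obtain sm: "summable (tt a b c)" and lim: "(\<lambda>n. real n * tt a b c n) \<longlonglongrightarrow> 0"
    using tt_summable_aux[OF assms] by blast
  have sm1: "summable (tt a b (c + 1))"
    using tt_summable_aux[of a b "c + 1"] assms by simp
  define f where "f n = c * (real n * tt a b c n)" for n
  have fl: "f \<longlonglongrightarrow> 0" unfolding f_def using tendsto_mult[OF tendsto_const lim, of c] by simp
  have trm: "c * (c - a - b) * tt a b c n - (c - a) * (c - b) * tt a b (c + 1) n = f n - f (Suc n)" for n
  proof -
    have cn: "c + n > 0" using c0 by simp
    have "f (Suc n) = c * tt a b c n * ((a + n) * (b + n) / (c + n))"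
    proof -
      have aux: "c * n1 * (T * (Y / (Z * n1))) = c * T * (Y / Z)" if "n1 > 0" "Z > 0" for n1 T Y Z :: real
        using that by (simp add: field_simps)
      have "f (Suc n) = c * (real n + 1) * (tt a b c n * ((a + n) * (b + n) / ((c + n) * (real n + 1))))"
        unfolding f_def tt_Suc[OF c0] by (simp add: mult.assoc)
      also have "\<dots> = c * tt a b c n * ((a + n) * (b + n) / (c + n))"
        by (rule aux) (use cn in auto)
      finally show ?thesis .
    qed
    moreover have "(c - a - b) * (c + n) - (c - a) * (c - b) = n * (c + n) - (a + n) * (b + n)"
      by (simp add: algebra_simps)
    ultimately show ?thesis unfolding tt_c1[OF c0] f_def using cn
      by (simp add: field_simps)
  qed
  have "(\<lambda>n. f n - f (Suc n)) sums (f 0 - 0)" by (rule telescope_sums'[OF fl])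
  hence "(\<lambda>n. c * (c - a - b) * tt a b c n - (c - a) * (c - b) * tt a b (c + 1) n) sums 0"
    unfolding trm f_def by simp
  moreover have "(\<lambda>n. c * (c - a - b) * tt a b c n - (c - a) * (c - b) * tt a b (c + 1) n) sums
      (c * (c - a - b) * suminf (tt a b c) - (c - a) * (c - b) * suminf (tt a b (c + 1)))"
    by (intro sums_diff sums_mult summable_sums sm sm1)
  ultimately show ?thesis using sums_unique2 by fastforce
qed

lemma gauss:
  assumes "0 < a" "0 < b" "a + b < c"
  shows "suminf (tt a b c) = P_abc a b c"
proof -
  have c0: "c > 0" using assms by simp
  define S where "S x = suminf (tt a b x)" for x
  define Pr where "Pr m = pochhammer (c - a) m * pochhammer (c - b) m / (pochhammer c m * pochhammer (c - a - b) m)" for m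
  have rel: "S c = Pr m * S (c + real m)" for m
  proof (induction m)
    case 0 then show ?case unfolding Pr_def by simp
  next
    case (Suc m)
    have cm: "a + b < c + real m" using assms by simp
    have "(c + m) * (c + m - a - b) * S (c + m) = (c + m - a) * (c + m - b) * S (c + m + 1)"
      unfolding S_def by (rule contiguous) (use assms cm in auto)
    moreover have "(c + m) * (c + m - a - b) > 0" using cm assms by simp
    ultimately have "S (c + m) = (c + m - a) * (c + m - b) / ((c + m) * (c + m - a - b)) * S (c + m + 1)"
      by (simp add: field_simps)
    moreover have "Pr (Suc m) = Pr m * ((c + m - a) * (c + m - b) / ((c + m) * (c + m - a - b)))"
    proof -
      have "pochhammer c m > 0" "pochhammer (c - a - b) m > 0" using assms by (simp_all add: pochhammer_pos)
      moreover have "(c + m) * (c + m - a - b) > 0" using cm assms by simp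
      ultimately show ?thesis unfolding Pr_def pochhammer_Suc by (simp add: field_simps)
    qed
    ultimately have "S c = Pr (Suc m) * S (c + m + 1)" using Suc.IH by simp
    moreover have "c + real (Suc m) = c + m + 1" by simp
    ultimately show ?case by metis
  qed
  have Gp: "Gamma c > 0" "Gamma (c - a - b) > 0" "Gamma (c - a) > 0" "Gamma (c - b) > 0"
    using assms by auto
  have Prl: "Pr \<longlonglongrightarrow> P_abc a b c"
  proof -
    define r where "r m = Gamma_series' c m * Gamma_series' (c - a - b) m / (Gamma_series' (c - a) m * Gamma_series' (c - b) m)" for m
    have lim: "r \<longlonglongrightarrow> P_abc a b c"
      unfolding r_def P_abc_def using Gp by (intro tendsto_intros Gamma_series'_LIMSEQ) auto
    have "r m = Pr m" if "m \<ge> 1" for m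
    proof -
      have e: "exp (c * ln (real m)) * exp ((c - a - b) * ln (real m)) = exp ((c - a) * ln (real m)) * exp ((c - b) * ln (real m))"
      proof -
        have "c * ln (real m) + (c - a - b) * ln (real m) = (c - a) * ln (real m) + (c - b) * ln (real m)"
          by (simp add: algebra_simps)
        then show ?thesis by (metis exp_add)
      qed
      have "fact (m-1) \<noteq> (0::real)" by simp
      have pos: "pochhammer c m > 0" "pochhammer (c - a - b) m > 0" "pochhammer (c - a) m > 0" "pochhammer (c - b) m > 0"
        using assms by (simp_all add: pochhammer_pos)
      have "r m = (exp (c * ln (real m)) * exp ((c - a - b) * ln (real m))) / (exp ((c - a) * ln (real m)) * exp ((c - b) * ln (real m)))
         * (pochhammer (c - a) m * pochhammer (c - b) m / (pochhammer c m * pochhammer (c - a - b) m))"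
        unfolding r_def Gamma_series'_def using pos \<open>fact (m-1) \<noteq> (0::real)\<close>
        by (simp add: field_simps)
      also have "\<dots> = Pr m" unfolding Pr_def by (simp add: e)
      finally show ?thesis .
    qed
    hence "\<forall>\<^sub>F m in sequentially. r m = Pr m" by (intro eventually_sequentiallyI[of 1]) auto
    from tendsto_cong[OF this] lim show ?thesis by simp
  qed
  have Sl: "(\<lambda>m. S (c + real m)) \<longlonglongrightarrow> 1"
  proof -
    obtain smc: "summable (tt a b c)" using tt_summable_aux[OF assms] by blast
    have sm: "summable (tt a b (c + real m))" for m
      using tt_summable_aux[of a b "c + real m"] assms by simp
    have eqS: "S (c + real m) = 1 + (\<Sum>n. tt a b (c + real m) (Suc n))" for m
      unfolding S_def using suminf_split_head[OF sm[of m]] by simp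
    define T where "T = (\<Sum>n. tt a b c (Suc n))"
    have smc': "summable (\<lambda>n. tt a b c (Suc n))" using smc by (simp add: summable_Suc_iff)
    have lo: "0 \<le> (\<Sum>n. tt a b (c + real m) (Suc n))" for m
      by (intro suminf_nonneg) (use sm[of m] tt_pos[of a b "c + real m"] assms in \<open>auto simp: summable_Suc_iff less_imp_le\<close>)
    have hi: "(\<Sum>n. tt a b (c + real m) (Suc n)) \<le> c / (c + real m) * T" for m
    proof -
      have "(\<Sum>n. tt a b (c + real m) (Suc n)) \<le> (\<Sum>n. c / (c + real m) * tt a b c (Suc n))"
        by (intro suminf_le tt_shift_bound summable_mult smc')
           (use sm[of m] assms in \<open>auto simp: summable_Suc_iff\<close>)
      also have "\<dots> = c / (c + real m) * T" unfolding T_def by (rule suminf_mult[OF smc'])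
      finally show ?thesis .
    qed
    have "(\<lambda>m. c / (c + real m) * T) \<longlonglongrightarrow> 0"
    proof -
      have "(\<lambda>m. c / (c + real m)) \<longlonglongrightarrow> 0"
      proof -
        have "(\<lambda>m. c * inverse (c + real m)) \<longlonglongrightarrow> c * 0"
          by (intro tendsto_intros tendsto_inverse_0_at_top filterlim_tendsto_add_at_top[OF tendsto_const filterlim_real_sequentially])
        then show ?thesis by (simp add: divide_inverse)
      qed
      from tendsto_mult[OF this tendsto_const, of T] show ?thesis by simp
    qed
    hence hl: "(\<lambda>m. c / (c + real m) * T) \<longlonglongrightarrow> 0" .
    have "(\<lambda>m. (\<Sum>n. tt a b (c + real m) (Suc n))) \<longlonglongrightarrow> 0"
      by (rule tendsto_sandwich[OF _ _ tendsto_const hl]) (auto intro!: always_eventually lo hi[unfolded times_divide_eq_left])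
    hence "(\<lambda>m. 1 + (\<Sum>n. tt a b (c + real m) (Suc n))) \<longlonglongrightarrow> 1 + 0"
      by (intro tendsto_intros)
    then show ?thesis unfolding eqS by simp
  qed
  have "(\<lambda>m. Pr m * S (c + real m)) \<longlonglongrightarrow> P_abc a b c * 1" by (intro tendsto_intros Prl Sl)
  moreover have "(\<lambda>m. Pr m * S (c + real m)) = (\<lambda>m. S c)" using rel by simp
  ultimately have "(\<lambda>m. S c) \<longlonglongrightarrow> P_abc a b c" by simp
  hence "S c = P_abc a b c" by (simp add: LIMSEQ_const_iff)
  then show ?thesis unfolding S_def .
qed

theorem lemma5p2:
  fixes a b c w :: real
  assumes "0 < a" and "0 < b" and "a + b < c" and "c < a + b + 1"
    and "0 < w" and "w < 1"
  shows "0 < P_abc a b c - 1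
    \<and> P_abc a b c - 1 < (P_abc a b c - hyp2F1 a b c w) / (1 - w) powr (c - a - b)
    \<and> (P_abc a b c - hyp2F1 a b c w) / (1 - w) powr (c - a - b) < Q_abc a b c"
proof -
  define s where "s = c - a - b"
  have s0: "0 < s" "s < 1" unfolding s_def using assms by auto
  have c0: "0 < c" using assms by simp
  define A where "A = tt a b c"
  define P where "P = P_abc a b c"
  define Q where "Q = Q_abc a b c"
  define K where "K = Gamma c / (Gamma a * Gamma b)"
  have Apos: "A n > 0" for n unfolding A_def using assms c0 by (intro tt_pos) auto
  obtain smA: "summable A" and nA: "(\<lambda>n. real n * A n) \<longlonglongrightarrow> 0"
    using tt_summable_aux[of a b c] assms unfolding A_def by blast
  have sumA: "suminf A = P" unfolding A_def P_def using gauss[of a b c] assms by simp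
  have F: "hyp2F1 a b c w = (\<Sum>n. A n * w ^ n)" unfolding hyp2F1_def A_def tt_def by simp
  have smF: "summable (\<lambda>n. A n * w ^ n)"
    by (rule summable_comparison_test[OF _ smA]) (use Apos assms in \<open>auto intro!: exI[of _ 0] mult_left_le simp: abs_mult less_imp_le power_le_one\<close>)
  define R where "R k = (\<Sum>n. A (n + Suc k))" for k
  have Rform: "R k = P - (\<Sum>i<Suc k. A i)" for k
    unfolding R_def using suminf_minus_initial_segment[OF smA, of "Suc k"] sumA by simp
  have Rrec: "R k = R (Suc k) + A (Suc k)" for k
    unfolding Rform by simp
  have R0: "R 0 = P - 1" unfolding Rform A_def by simp
  have Rpos: "R k > 0" for k
    unfolding R_def by (rule suminf_pos) (use summable_ignore_initial_segment[OF smA, of "Suc k"] Apos in auto)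
  have Rlim: "R \<longlonglongrightarrow> 0"
  proof -
    have "(\<lambda>k. \<Sum>i<Suc k. A i) \<longlonglongrightarrow> P"
      using LIMSEQ_Suc[OF summable_LIMSEQ[OF smA]] sumA by simp
    hence "(\<lambda>k. P - (\<Sum>i<Suc k. A i)) \<longlonglongrightarrow> P - P" by (intro tendsto_intros)
    then show ?thesis unfolding Rform by simp
  qed
  define e where "e k = pochhammer (1 - s) k / fact k" for k
  have epos: "e k > 0" for k unfolding e_def using s0 by (simp add: pochhammer_pos)
  have eSuc: "e (Suc k) = e k * ((1 - s + k) / (k + 1))" for k
    unfolding e_def by (simp add: pochhammer_Suc field_simps)
  have elim: "e \<longlonglongrightarrow> 0" unfolding e_def by (rule e_lim[OF s0])
  have e0: "e 0 = 1" unfolding e_def by simp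
  have e1: "e 1 = 1 - s" unfolding e_def by simp
  have Qe: "Q * (e k - e (Suc k)) = K * Gamma (real (Suc k) - s) / fact (Suc k)" for k
  proof -
    have pe: "pochhammer (1 - s) k = Gamma (1 - s + k) / Gamma (1 - s)"
      using s0 by (intro pochhammer_Gamma) auto
    have g1: "Gamma (1 - s) > 0" using s0 by simp
    hence g1': "Gamma (1 - s) \<noteq> 0" by linarith
    have Qd: "Q = K * Gamma (1 - s) / s" unfolding Q_def Q_abc_def K_def s_def by (simp add: algebra_simps)
    have d: "e k - e (Suc k) = e k * (s / (k + 1))" unfolding eSuc by (simp add: field_simps)
    have r: "real (Suc k) - s = 1 - s + k" by simp
    have aux: "K * G1 / s * (G / G1 / f * (s / m)) = K * G / (m * f)"
      if "G1 \<noteq> 0" "s \<noteq> 0" "f \<noteq> 0" "m \<noteq> 0" for G1 G f m :: real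
      using that by (simp add: field_simps)
    have "Q * (e k - e (Suc k)) = K * Gamma (1 - s) / s * (Gamma (1 - s + k) / Gamma (1 - s) / fact k * (s / (real k + 1)))"
      unfolding d Qd unfolding e_def pe by simp
    also have "\<dots> = K * Gamma (1 - s + k) / ((real k + 1) * fact k)"
      by (rule aux) (use g1' s0 in auto)
    also have "\<dots> = K * Gamma (real (Suc k) - s) / fact (Suc k)" unfolding r by (simp add: algebra_simps)
    finally show ?thesis .
  qed
  define E where "E k = Q * e k - R k" for k
  have Edec: "E (Suc k) < E k" for k
  proof -
    have "A (Suc k) < K * Gamma (real (Suc k) - s) / fact (Suc k)"
      unfolding A_def K_def s_def by (rule tt_bound) (use assms in auto)
    then show ?thesis unfolding E_def using Qe[of k] Rrec[of k] by (simp add: algebra_simps)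
  qed
  have Elim: "E \<longlonglongrightarrow> 0"
    unfolding E_def using tendsto_diff[OF tendsto_mult[OF tendsto_const elim, of Q] Rlim] by simp
  have Eds: "decseq E" using Edec by (intro decseq_SucI less_imp_le)
  have Epos: "E k > 0" for k using Edec[of k] decseq_ge[OF Eds Elim, of "Suc k"] by simp
  define psi where "psi m = s * R m - (real m - s) * A m" for m
  have psidec: "psi (Suc m) < psi m" for m
  proof -
    have "(c - a) * (c - b) > 0" using assms by (intro mult_pos_pos) auto
    hence "(real m - s) * (c + m) < (a + m) * (b + m)"
      unfolding s_def using assms by (simp add: algebra_simps)
    hence "(real m - s) < (a + m) * (b + m) / (c + m)" using c0 by (simp add: field_simps)
    hence "(real m - s) * A m < ((a + m) * (b + m) / (c + m)) * A m" by (rule mult_strict_right_mono[OF _ Apos[of m]])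
    also have "\<dots> = (real m + 1) * A (Suc m)"
    proof -
      have aux: "Y / Z * T = n1 * (T * (Y / (Z * n1)))" if "n1 > 0" "Z > 0" for n1 T Y Z :: real
        using that by (simp add: field_simps)
      show ?thesis unfolding A_def tt_Suc[OF c0] of_nat_add of_nat_1 by (rule aux) (use c0 in auto)
    qed
    finally have "(real m - s) * A m < (real m + 1) * A (Suc m)" .
    then show ?thesis unfolding psi_def using Rrec[of m] by (simp add: algebra_simps)
  qed
  have psilim: "psi \<longlonglongrightarrow> 0"
  proof -
    have Al: "A \<longlonglongrightarrow> 0" by (rule summable_LIMSEQ_zero[OF smA])
    have "(\<lambda>m. s * R m - (real m * A m) + s * A m) \<longlonglongrightarrow> s * 0 - 0 + s * 0"
      by (intro tendsto_intros Rlim nA Al)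
    then show ?thesis unfolding psi_def by (simp add: algebra_simps)
  qed
  have psids: "decseq psi" using psidec by (intro decseq_SucI less_imp_le)
  have psipos: "psi m > 0" for m using psidec[of m] decseq_ge[OF psids psilim, of "Suc m"] by simp
  have Rstep: "R (Suc k) * (real k + 1) - (real k + 1 - s) * R k = psi (Suc k)" for k
    unfolding psi_def using Rrec[of k] by (simp add: algebra_simps)
  have Rlow: "R 0 * e k \<le> R k" for k
  proof (induction k)
    case 0 then show ?case using e0 by simp
  next
    case (Suc k)
    have "R 0 * e (Suc k) = (R 0 * e k) * ((1 - s + k) / (k + 1))" unfolding eSuc by simp
    also have "\<dots> \<le> R k * ((1 - s + k) / (k + 1))"
      by (rule mult_right_mono[OF Suc.IH]) (use s0 in simp)
    also have "\<dots> \<le> R (Suc k)"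
      using Rstep[of k] psipos[of "Suc k"] by (simp add: field_simps)
    finally show ?case .
  qed
  have Rlow1: "R 0 * e 1 < R 1"
  proof -
    have "R 0 * e 1 = R 0 - s * R 0" unfolding e1 by (simp add: algebra_simps)
    moreover have "R 1 * 1 - (1 - s) * R 0 = psi 1" using Rstep[of 0] by simp
    ultimately show ?thesis using psipos[of 1] by (simp add: algebra_simps)
  qed
  have Rdec: "R (Suc k) \<le> R k" for k using Rrec[of k] Apos[of "Suc k"] by simp
  have Rle0: "R k \<le> R 0" for k
    using decseq_SucI[of R, OF Rdec] by (simp add: decseq_def)
  have smX: "summable (\<lambda>k. R k * w ^ k)"
  proof (rule summable_comparison_test[of _ "\<lambda>k. R 0 * w ^ k"])
    show "\<exists>N. \<forall>n\<ge>N. norm (R n * w ^ n) \<le> R 0 * w ^ n"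
      using Rpos Rle0 assms by (auto intro!: exI[of _ 0] mult_right_mono simp: abs_mult less_imp_le)
    show "summable (\<lambda>k. R 0 * w ^ k)" using assms by (intro summable_mult summable_geometric) simp
  qed
  define X where "X = (\<Sum>k. R k * w ^ k)"
  define Y where "Y = (1 - w) powr (s - 1)"
  have Ysum: "(\<lambda>k. e k * w ^ k) sums Y"
  proof -
    have "(\<lambda>n. ((s - 1) gchoose n) * (- w) ^ n) sums (1 + - w) powr (s - 1)"
      by (rule gen_binomial_real) (use assms in simp)
    moreover have "((s - 1) gchoose n) * (- w) ^ n = e n * w ^ n" for n
    proof -
      have m1: "- (s - 1) = 1 - s" by simp
      have ab: "(u * p / f) * (u * W) = (u * u) * p / f * W" for u p f W :: real
        by (simp add: divide_inverse mult_ac)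
      have "((s - 1) gchoose n) * (- w) ^ n = ((-1) ^ n * pochhammer (1 - s) n / fact n) * ((-1) ^ n * w ^ n)"
        unfolding gbinomial_pochhammer m1 power_minus[of w n] by (rule refl)
      also have "\<dots> = ((-1) ^ n * (-1) ^ n) * pochhammer (1 - s) n / fact n * w ^ n" by (rule ab)
      also have "(-1::real) ^ n * (-1) ^ n = 1" by (simp add: power_mult_distrib[symmetric])
      finally show ?thesis unfolding e_def by simp
    qed
    ultimately show ?thesis unfolding Y_def by simp
  qed
  have Ypos: "Y > 0" unfolding Y_def using assms by simp
  have smY: "summable (\<lambda>k. e k * w ^ k)" using Ysum by (rule sums_summable)
  have key: "P - hyp2F1 a b c w = (1 - w) * X"
  proof -
    have h: "X = R 0 + (\<Sum>k. R (Suc k) * w ^ Suc k)"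
      unfolding X_def using suminf_split_head[OF smX] by simp
    have smS: "summable (\<lambda>k. A (Suc k) * w ^ Suc k)"
      using smF summable_Suc_iff[of "\<lambda>n. A n * w ^ n"] by (simp only:)
    have "(\<Sum>k. R (Suc k) * w ^ Suc k) = (\<Sum>k. w * (R k * w ^ k) - A (Suc k) * w ^ Suc k)"
    proof (intro suminf_cong)
      fix k
      have "R (Suc k) = R k - A (Suc k)" using Rrec[of k] by simp
      then show "R (Suc k) * w ^ Suc k = w * (R k * w ^ k) - A (Suc k) * w ^ Suc k"
        by (simp only: power_Suc left_diff_distrib) (simp add: mult_ac)
    qed
    also have "\<dots> = w * X - (\<Sum>k. A (Suc k) * w ^ Suc k)"
    proof -
      have s1: "summable (\<lambda>k. w * (R k * w ^ k))" using smX by (rule summable_mult)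
      show ?thesis unfolding X_def suminf_diff[OF s1 smS, symmetric] suminf_mult[OF smX] ..
    qed
    also have "(\<Sum>k. A (Suc k) * w ^ Suc k) = hyp2F1 a b c w - 1"
      unfolding F using suminf_split_head[OF smF] by (simp add: A_def)
    finally have ch: "(\<Sum>k. R (Suc k) * w ^ Suc k) = w * X - (hyp2F1 a b c w - 1)" .
    have "(1 - w) * X = X - w * X" by (simp add: algebra_simps)
    then show ?thesis using h R0 ch by linarith
  qed
  have ratio: "(P - hyp2F1 a b c w) / (1 - w) powr (c - a - b) = X / Y"
  proof -
    have "(1 - w) powr (c - a - b) = (1 - w) powr 1 * (1 - w) powr (s - 1)"
      unfolding s_def[symmetric] by (subst powr_add[symmetric]) simp
    also have "\<dots> = (1 - w) * Y" unfolding Y_def using assms by simp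
    finally have "(1 - w) powr (c - a - b) = (1 - w) * Y" .
    then show ?thesis unfolding key using assms by simp
  qed
  have lo: "(P - 1) * Y < X"
  proof -
    have "0 < (\<Sum>k. R k * w ^ k - (P - 1) * (e k * w ^ k))"
    proof (rule suminf_pos2[of _ 1])
      show "summable (\<lambda>k. R k * w ^ k - (P - 1) * (e k * w ^ k))"
        by (intro summable_diff summable_mult smX smY)
      show "0 \<le> R k * w ^ k - (P - 1) * (e k * w ^ k)" for k
      proof -
        have "R k * w ^ k - (P - 1) * (e k * w ^ k) = (R k - R 0 * e k) * w ^ k" by (simp add: R0 algebra_simps)
        moreover have "0 \<le> (R k - R 0 * e k) * w ^ k" using Rlow[of k] assms by simp
        ultimately show ?thesis by simp
      qed
      show "0 < R 1 * w ^ 1 - (P - 1) * (e 1 * w ^ 1)"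
      proof -
        have "R 1 * w ^ 1 - (P - 1) * (e 1 * w ^ 1) = (R 1 - R 0 * e 1) * w" by (simp add: R0 algebra_simps)
        moreover have "0 < (R 1 - R 0 * e 1) * w" using Rlow1 assms by simp
        ultimately show ?thesis by simp
      qed
    qed
    also have "\<dots> = X - (P - 1) * Y"
    proof -
      have s1: "summable (\<lambda>k. (P - 1) * (e k * w ^ k))" using smY by (rule summable_mult)
      show ?thesis unfolding X_def suminf_diff[OF smX s1, symmetric] suminf_mult[OF smY] sums_unique[OF Ysum, symmetric] ..
    qed
    finally show ?thesis by simp
  qed
  have hi: "X < Q * Y"
  proof -
    have "0 < (\<Sum>k. Q * (e k * w ^ k) - R k * w ^ k)"
    proof (rule suminf_pos)
      show "summable (\<lambda>k. Q * (e k * w ^ k) - R k * w ^ k)"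
        by (intro summable_diff summable_mult smX smY)
      show "0 < Q * (e k * w ^ k) - R k * w ^ k" for k
      proof -
        have "Q * (e k * w ^ k) - R k * w ^ k = E k * w ^ k" unfolding E_def by (simp add: algebra_simps)
        moreover have "0 < E k * w ^ k" using Epos[of k] assms by simp
        ultimately show ?thesis by simp
      qed
    qed
    also have "\<dots> = Q * Y - X"
    proof -
      have s1: "summable (\<lambda>k. Q * (e k * w ^ k))" using smY by (rule summable_mult)
      show ?thesis unfolding X_def suminf_diff[OF s1 smX, symmetric] suminf_mult[OF smY] sums_unique[OF Ysum, symmetric] ..
    qed
    finally show ?thesis by simp
  qed
  have "0 < P - 1" using Rpos[of 0] R0 by simp
  moreover have "P - 1 < X / Y" using lo Ypos by (simp add: pos_less_divide_eq)
  moreover have "X / Y < Q" using hi Ypos by (simp add: pos_divide_less_eq)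
  ultimately show ?thesis unfolding P_def[symmetric] Q_def[symmetric] ratio by simp
qed

end
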